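(* For the class $\mathcal{A}=\{A_\rho:\rho\in[0,1]\}$ of MWIS greedy heuristics (adaptive or non-adaptive), there is a distribution over sequences $x_1,\dots,x_T$ of MWIS instances on at most $n$ vertices such that every (possibly randomized) online learning algorithm has expected regret at least $1-o_n(1)$, where $o_n(1)$ is independent of $T$ and tends to $0$ as $n\to\infty$.
   Context: MWIS instance: undirected graph with nonnegative vertex weights. $A_\rho$ repeatedly selects, among vertices not yet selected or blocked, one maximizing $w_v/(1+\deg(v))^\rho$ (ties lexicographic), adds it, and blocks its neighbors; $\deg(v)$ is the original degree (non-adaptive) or the degree in the remaining induced subgraph (adaptive). $\mathrm{cost}(A_\rho,x)\in[0,1]$ is the total weight of the returned independent set (to be maximized). Online learning: at each step $t$ the learner chooses $A_t\in\mathcal{A}$ (possibly randomly) knowing only $x_1,\dots,x_{t-1}$; its regret on $x_1,\dots,x_T$ is $\frac1T\big(\sup_{A\in\mathcal{A}}\sum_{t=1}^T\mathrm{cost}(A,x_t)-\sum_{t=1}^T\mathrm{cost}(A_t,x_t)\big)$. *)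

theory Defs
  imports "HOL-Probability.Probability"
begin

record mwis =
  nv  :: nat
  adj :: "nat \<Rightarrow> nat \<Rightarrow> bool"
  wt  :: "nat \<Rightarrow> real"

definition indep_set :: "mwis \<Rightarrow> nat set \<Rightarrow> bool" where
  "indep_set x S \<longleftrightarrow> S \<subseteq> {0..<nv x} \<and> (\<forall>u\<in>S. \<forall>v\<in>S. \<not> adj x u v)"

text \<open>Valid instance: simple undirected graph, nonnegative weights, and the weight of
  every independent set lies in [0,1] (so that every cost lies in [0,1]).\<close>
definition valid_mwis :: "mwis \<Rightarrow> bool" where
  "valid_mwis x \<longleftrightarrow>
     (\<forall>u v. adj x u v \<longrightarrow> u < nv x \<and> v < nv x) \<and>
     (\<forall>u v. adj x u v \<longleftrightarrow> adj x v u) \<and>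
     (\<forall>v. \<not> adj x v v) \<and>
     (\<forall>v<nv x. wt x v \<ge> 0) \<and>
     (\<forall>S. indep_set x S \<longrightarrow> sum (wt x) S \<le> 1)"

definition gdeg :: "bool \<Rightarrow> mwis \<Rightarrow> nat set \<Rightarrow> nat \<Rightarrow> nat" where
  "gdeg ad x R v = (if ad then card {u\<in>R. adj x v u} else card {u\<in>{0..<nv x}. adj x v u})"

definition gscore :: "bool \<Rightarrow> real \<Rightarrow> mwis \<Rightarrow> nat set \<Rightarrow> nat \<Rightarrow> real" where
  "gscore ad \<rho> x R v = wt x v / (1 + real (gdeg ad x R v)) powr \<rho>"

definition gpick :: "bool \<Rightarrow> real \<Rightarrow> mwis \<Rightarrow> nat set \<Rightarrow> nat" where
  "gpick ad \<rho> x R = (LEAST v. v \<in> R \<and> (\<forall>u\<in>R. gscore ad \<rho> x R u \<le> gscore ad \<rho> x R v))"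

text \<open>Greedy run with a fuel argument (fuel nv suffices: each step removes a vertex).\<close>
fun greedy_run :: "bool \<Rightarrow> real \<Rightarrow> mwis \<Rightarrow> nat \<Rightarrow> nat set \<Rightarrow> nat set" where
  "greedy_run ad \<rho> x 0 R = {}"
| "greedy_run ad \<rho> x (Suc k) R =
     (if R = {} then {}
      else (let v = gpick ad \<rho> x R
            in insert v (greedy_run ad \<rho> x k (R - {v} - {u. adj x v u}))))"

definition greedy :: "bool \<Rightarrow> real \<Rightarrow> mwis \<Rightarrow> nat set" where
  "greedy ad \<rho> x = greedy_run ad \<rho> x (nv x) {0..<nv x}"

definition cost :: "bool \<Rightarrow> real \<Rightarrow> mwis \<Rightarrow> real" where
  "cost ad \<rho> x = sum (wt x) (greedy ad \<rho> x)"

definition valid_learner :: "(mwis list \<Rightarrow> real measure) \<Rightarrow> bool" where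
  "valid_learner L \<longleftrightarrow>
     (\<forall>h. prob_space (L h) \<and> sets (L h) = sets borel \<and> emeasure (L h) {0..1} = 1)"

definition regret :: "bool \<Rightarrow> nat \<Rightarrow> (mwis list \<Rightarrow> real measure) \<Rightarrow> mwis list \<Rightarrow> real" where
  "regret ad T L xs =
     (1 / real T) * ((SUP \<rho>\<in>{0..1}. \<Sum>t<T. cost ad \<rho> (xs ! t))
        - (\<Sum>t<T. \<integral>\<rho>. cost ad \<rho> (xs ! t) \<partial>(L (take t xs))))"

definition expected_regret :: "bool \<Rightarrow> nat \<Rightarrow> mwis list pmf \<Rightarrow> (mwis list \<Rightarrow> real measure) \<Rightarrow> real" where
  "expected_regret ad T D L = measure_pmf.expectation D (regret ad T L)"

end

theory Submission
  imports Defs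
begin


lemma gpick_prop:
  assumes "finite R" "R \<noteq> {}"
  shows "gpick ad \<rho> x R \<in> R \<and> (\<forall>u\<in>R. gscore ad \<rho> x R u \<le> gscore ad \<rho> x R (gpick ad \<rho> x R))"
proof -
  let ?f = "gscore ad \<rho> x R"
  have "Max (?f ` R) \<in> ?f ` R" using assms by (intro Max_in) auto
  then obtain v where v: "v \<in> R" "?f v = Max (?f ` R)" by (metis imageE)
  have vm: "\<forall>u\<in>R. ?f u \<le> ?f v" using v assms by auto
  show ?thesis unfolding gpick_def
    by (rule LeastI[of _ v]) (use v vm in auto)
qed

lemma gpick_le:
  assumes "v \<in> R" "\<forall>u\<in>R. gscore ad \<rho> x R u \<le> gscore ad \<rho> x R v"
  shows "gpick ad \<rho> x R \<le> v"
  unfolding gpick_def by (rule Least_le) (use assms in auto)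

lemma run_sub: "finite R \<Longrightarrow> greedy_run ad \<rho> x k R \<subseteq> R"
proof (induction k arbitrary: R)
  case 0 then show ?case by simp
next
  case (Suc k)
  show ?case
  proof (cases "R = {}")
    case True then show ?thesis by simp
  next
    case False
    let ?v = "gpick ad \<rho> x R"
    have "?v \<in> R" using gpick_prop[OF Suc.prems False] by blast
    moreover have "greedy_run ad \<rho> x k (R - {?v} - {u. adj x ?v u}) \<subseteq> R - {?v} - {u. adj x ?v u}"
      using Suc by auto
    ultimately show ?thesis using False by (auto simp: Let_def)
  qed
qed

lemma run_indep: "finite R \<Longrightarrow> (\<forall>u\<in>R. \<forall>v\<in>R. \<not> adj x u v) \<Longrightarrow> card R \<le> k \<Longrightarrow> greedy_run ad \<rho> x k R = R"
proof (induction k arbitrary: R)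
  case 0 then show ?case by simp
next
  case (Suc k)
  show ?case
  proof (cases "R = {}")
    case True then show ?thesis by simp
  next
    case False
    let ?v = "gpick ad \<rho> x R"
    have v: "?v \<in> R" using gpick_prop[OF Suc.prems(1) False] by blast
    have e: "R - {?v} - {u. adj x ?v u} = R - {?v}" using Suc.prems(2) v by auto
    have "greedy_run ad \<rho> x k (R - {?v}) = R - {?v}"
      apply (rule Suc.IH) using Suc.prems v False by (auto simp: card_Diff_singleton)
    then show ?thesis using False v e by (auto simp: Let_def)
  qed
qed



definition isA :: "nat \<Rightarrow> nat \<Rightarrow> bool" where "isA m u \<longleftrightarrow> 2 \<le> u \<and> u < m + 2"
definition isQ :: "nat \<Rightarrow> nat \<Rightarrow> bool" where "isQ m u \<longleftrightarrow> m + 2 \<le> u \<and> u < 2*m + 2"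
definition isB :: "nat \<Rightarrow> nat \<Rightarrow> bool" where "isB m u \<longleftrightarrow> u < 2 \<or> isQ m u"

definition gadj :: "nat \<Rightarrow> nat \<Rightarrow> nat \<Rightarrow> bool" where
  "gadj m u v \<longleftrightarrow> (isA m u \<and> isB m v) \<or> (isB m u \<and> isA m v) \<or> (u = 0 \<and> isQ m v) \<or> (isQ m u \<and> v = 0)"

definition gw :: "nat \<Rightarrow> real \<Rightarrow> real \<Rightarrow> nat \<Rightarrow> real" where
  "gw m a b v = (if v = 0 then (1/m) * ((2*m+1)/(m+3)) powr a
     else if v = 1 then (1/m) * ((m+1)/(m+3)) powr b
     else if isA m v then 1/m else 0)"

definition gad :: "nat \<Rightarrow> real \<Rightarrow> real \<Rightarrow> mwis" where
  "gad m a b = \<lparr>nv = 2*m+2, adj = gadj m, wt = gw m a b\<rparr>"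

lemma deg0: "{u\<in>{0..<2*m+2}. gadj m 0 u} = {2..<2*m+2}"
  by (auto simp: gadj_def isA_def isB_def isQ_def)
lemma deg1: "{u\<in>{0..<2*m+2}. gadj m 1 u} = {2..<m+2}"
  by (auto simp: gadj_def isA_def isB_def isQ_def)
lemma degA: "isA m v \<Longrightarrow> {u\<in>{0..<2*m+2}. gadj m v u} = {0,1} \<union> {m+2..<2*m+2}"
  by (auto simp: gadj_def isA_def isB_def isQ_def)
lemma cardA: "isA m v \<Longrightarrow> card {u\<in>{0..<2*m+2}. gadj m v u} = m + 2"
  by (subst degA) (auto simp: card_Un_disjoint)

lemma gscore0:
  "gscore ad \<rho> (gad m a b) {0..<2*m+2} v = gw m a b v / (1 + real (card {u\<in>{0..<2*m+2}. gadj m v u})) powr \<rho>"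
  by (simp add: gscore_def gdeg_def gad_def)

lemma key_b:
  fixes m :: nat and a \<rho> :: real
  assumes "m \<ge> 3"
  shows "(1/m) / (real m+3) powr \<rho> > (1/m) * ((2*real m+1)/(real m+3)) powr a / (2*real m+1) powr \<rho> \<longleftrightarrow> a < \<rho>"
proof -
  have p: "real m > 0" using assms by simp
  have "(1/m) / (real m+3) powr \<rho> > (1/m) * ((2*real m+1)/(real m+3)) powr a / (2*real m+1) powr \<rho>
     \<longleftrightarrow> ((2*real m+1)/(real m+3)) powr a < ((2*real m+1)/(real m+3)) powr \<rho>"
    using p by (simp add: powr_divide field_simps)
  also have "\<dots> \<longleftrightarrow> a < \<rho>" using assms by (intro powr_less_cancel_iff) (auto simp: field_simps)
  finally show ?thesis .
qed

lemma key_c: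
  fixes m :: nat and b \<rho> :: real
  assumes "m \<ge> 3"
  shows "(1/m) / (real m+3) powr \<rho> > (1/m) * ((real m+1)/(real m+3)) powr b / (real m+1) powr \<rho> \<longleftrightarrow> \<rho> < b"
proof -
  have p: "real m > 0" using assms by simp
  have "(1/m) / (real m+3) powr \<rho> > (1/m) * ((real m+1)/(real m+3)) powr b / (real m+1) powr \<rho>
     \<longleftrightarrow> ((real m+3)/(real m+1)) powr \<rho> < ((real m+3)/(real m+1)) powr b"
    using p by (simp add: powr_divide field_simps)
  also have "\<dots> \<longleftrightarrow> \<rho> < b" using assms by (intro powr_less_cancel_iff) (auto simp: field_simps)
  finally show ?thesis .
qed



lemma gw_nonneg: "gw m a b v \<ge> 0" by (simp add: gw_def)

lemma gw0_le: assumes "m \<ge> 3" "a \<le> 1" shows "gw m a b 0 \<le> 2/m"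
proof -
  have base: "(2*real m+1)/(m+3) > 1" using assms by (simp add: field_simps)
  have "((2*real m+1)/(m+3)) powr a \<le> ((2*real m+1)/(m+3)) powr 1"
    using powr_le_cancel_iff[OF base, of a 1] assms by linarith
  also have "\<dots> \<le> 2" using assms by (simp add: field_simps)
  finally have "((2*real m+1)/(m+3)) powr a \<le> 2" .
  then show ?thesis using assms by (simp add: gw_def field_simps)
qed

lemma gw1_le: assumes "m \<ge> 3" "b \<ge> 0" shows "gw m a b 1 \<le> 1/m"
proof -
  have "((real m+1)/(m+3)) powr b \<le> ((real m+1)/(m+3)) powr 0"
    using assms by (intro powr_mono') (auto simp: field_simps)
  then have "((real m+1)/(m+3)) powr b \<le> 1" by simp
  then show ?thesis using assms by (simp add: gw_def field_simps)
qed

lemma sc0: "gscore ad \<rho> (gad m a b) {0..<2*m+2} 0 = (1/m) * ((2*m+1)/(m+3)) powr a / (2*m+1) powr \<rho>"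
  by (subst gscore0, subst deg0) (simp add: gw_def add.commute)
lemma sc1: "gscore ad \<rho> (gad m a b) {0..<2*m+2} 1 = (1/m) * ((m+1)/(m+3)) powr b / (m+1) powr \<rho>"
  by (subst gscore0, subst deg1) (simp add: gw_def add.commute)
lemma scA: "isA m v \<Longrightarrow> gscore ad \<rho> (gad m a b) {0..<2*m+2} v = (1/m) / (m+3) powr \<rho>"
  apply (subst gscore0, subst cardA, assumption)
  apply (auto simp: gw_def isA_def add.commute)
  done
lemma scQ: "isQ m v \<Longrightarrow> gscore ad \<rho> (gad m a b) {0..<2*m+2} v = 0"
  by (subst gscore0) (simp add: gw_def isQ_def isA_def)



lemma R0_cases: "v \<in> {0..<2*m+2} \<Longrightarrow> v = 0 \<or> v = 1 \<or> isA m v \<or> isQ m v"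
  by (auto simp: isA_def isQ_def)

lemma cost_good:
  assumes m: "m \<ge> 3" and r: "a < \<rho>" "\<rho> < b"
  shows "cost ad \<rho> (gad m a b) = 1"
proof -
  let ?x = "gad m a b" and ?R = "{0..<2*m+2}"
  let ?s = "gscore ad \<rho> ?x ?R"
  let ?v = "gpick ad \<rho> ?x ?R"
  have ne: "?R \<noteq> {}" by auto
  have v: "?v \<in> ?R" "\<forall>u\<in>?R. ?s u \<le> ?s ?v" using gpick_prop[of ?R ad \<rho> ?x] ne by auto
  have A2: "isA m 2" using m by (simp add: isA_def)
  have s2: "?s 2 = (1/m) / (real m+3) powr \<rho>" using scA[OF A2] .
  have gt0: "?s 2 > ?s 0" unfolding sc0 s2 by (rule key_b[OF m, THEN iffD2]) (use r in simp)
  have gt1: "?s 2 > ?s 1" unfolding sc1 s2 by (rule key_c[OF m, THEN iffD2]) (use r in simp)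
  have pos: "?s 2 > 0" using s2 m by simp
  have 2: "2 \<in> ?R" using m by simp
  have vA: "isA m ?v"
  proof -
    have le: "?s 2 \<le> ?s ?v" using v 2 by blast
    from R0_cases[OF v(1)] consider "?v = 0" | "?v = 1" | "isA m ?v" | "isQ m ?v" by metis
    then show ?thesis
    proof cases
      case 1 then show ?thesis using le gt0 by simp
    next
      case 2 then show ?thesis using le gt1 by simp
    next
      case 4 then show ?thesis using le pos scQ[OF 4, of ad \<rho> a b] by simp
    qed
  qed
  have rest: "?R - {?v} - {u. adj ?x ?v u} = {2..<m+2} - {?v}"
    using vA by (auto simp: gad_def gadj_def isA_def isB_def isQ_def)
  have run: "greedy_run ad \<rho> ?x (2*m+1) ({2..<m+2} - {?v}) = {2..<m+2} - {?v}"
  proof (rule run_indep)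
    have "card ({2..<m+2} - {?v}) \<le> card {2..<m+2}" by (rule card_mono) auto
    then show "card ({2..<m+2} - {?v}) \<le> 2*m+1" by simp
  qed (auto simp: gad_def gadj_def isA_def isB_def isQ_def)
  have nvx: "nv ?x = Suc (2*m+1)" "{0..<nv ?x} = ?R" by (simp_all add: gad_def)
  have "greedy ad \<rho> ?x = insert ?v (greedy_run ad \<rho> ?x (2*m+1) (?R - {?v} - {u. adj ?x ?v u}))"
    unfolding greedy_def nvx(2) unfolding nvx(1) greedy_run.simps(2) Let_def by (simp only: ne if_False)
  also have "\<dots> = insert ?v ({2..<m+2} - {?v})" unfolding rest run ..
  also have "\<dots> = {2..<m+2}" using vA by (auto simp: isA_def)
  finally have g: "greedy ad \<rho> ?x = {2..<m+2}" .
  have "cost ad \<rho> ?x = (\<Sum>v\<in>{2..<m+2}. 1 / real m)"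
    unfolding cost_def g by (intro sum.cong) (auto simp: gad_def gw_def isA_def)
  also have "\<dots> = 1" using m by simp
  finally show ?thesis .
qed

lemma cost_bad:
  assumes m: "m \<ge> 3" and r: "\<not> (a < \<rho> \<and> \<rho> < b)"
  shows "cost ad \<rho> (gad m a b) \<le> gw m a b 0 + gw m a b 1"
proof -
  let ?x = "gad m a b" and ?R = "{0..<2*m+2}"
  let ?s = "gscore ad \<rho> ?x ?R"
  let ?v = "gpick ad \<rho> ?x ?R"
  have ne: "?R \<noteq> {}" by auto
  have A2: "isA m 2" using m by (simp add: isA_def)
  have s2: "?s 2 = (1/m) / (real m+3) powr \<rho>" using scA[OF A2] .
  have nn: "\<And>u. ?s u \<ge> 0" by (simp add: gscore_def gad_def gw_nonneg)
  have "\<not> (?s 2 > ?s 0 \<and> ?s 2 > ?s 1)"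
    unfolding sc0 sc1 s2 key_b[OF m] key_c[OF m] using r by simp
  then have "?s 0 \<ge> ?s 2 \<or> ?s 1 \<ge> ?s 2" by linarith
  then obtain w :: nat where w: "w \<le> 1" "?s w \<ge> ?s 2" "?s w \<ge> ?s 0" "?s w \<ge> ?s 1"
  proof (cases "?s 0 \<ge> ?s 1")
    case True
    then show ?thesis using that[of 0] \<open>?s 0 \<ge> ?s 2 \<or> ?s 1 \<ge> ?s 2\<close> by auto
  next
    case False
    then show ?thesis using that[of 1] \<open>?s 0 \<ge> ?s 2 \<or> ?s 1 \<ge> ?s 2\<close> by auto
  qed
  have wmax: "\<forall>u\<in>?R. ?s u \<le> ?s w"
  proof
    fix u assume "u \<in> ?R"
    then consider "u = 0" | "u = 1" | "isA m u" | "isQ m u" using R0_cases[of u m] by blast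
    then show "?s u \<le> ?s w"
    proof cases
      case 3 then show ?thesis using w(2) scA[OF 3, of ad \<rho> a b] s2 by simp
    next
      case 4 then show ?thesis using scQ[OF 4, of ad \<rho> a b] nn[of w] by simp
    qed (use w in auto)
  qed
  have "w \<in> ?R" using w by simp
  then have vle: "?v \<le> 1" using gpick_le[OF _ wmax] w by force
  have sub1: "greedy_run ad \<rho> ?x (2*m+1) (?R - {?v} - {u. adj ?x ?v u}) \<subseteq> ?R - {?v} - {u. adj ?x ?v u}"
    by (rule run_sub) simp
  have sub2: "?R - {?v} - {u. adj ?x ?v u} \<subseteq> {0,1} \<union> {m+2..<2*m+2}"
    using vle m by (auto simp: gad_def gadj_def isA_def isB_def isQ_def)
  have nvx: "nv ?x = Suc (2*m+1)" "{0..<nv ?x} = ?R" by (simp_all add: gad_def)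
  have gE: "greedy ad \<rho> ?x = insert ?v (greedy_run ad \<rho> ?x (2*m+1) (?R - {?v} - {u. adj ?x ?v u}))"
    unfolding greedy_def nvx(2) unfolding nvx(1) greedy_run.simps(2) Let_def by (simp only: ne if_False)
  have v01: "?v \<in> {0,1} \<union> {m+2..<2*m+2}" using vle by auto
  have gs: "greedy ad \<rho> ?x \<subseteq> {0,1} \<union> {m+2..<2*m+2}"
    unfolding gE insert_subset using v01 subset_trans[OF sub1 sub2] by (rule conjI)
  have "cost ad \<rho> ?x \<le> sum (gw m a b) ({0,1} \<union> {m+2..<2*m+2})"
  proof -
    have wtx: "wt ?x = gw m a b" by (simp add: gad_def)
    show ?thesis unfolding cost_def wtx by (rule sum_mono2) (use gs in \<open>auto simp: gw_nonneg\<close>)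
  qed
  also have "\<dots> = gw m a b 0 + gw m a b 1 + sum (gw m a b) {m+2..<2*m+2}"
    using m by (subst sum.union_disjoint) auto
  also have "sum (gw m a b) {m+2..<2*m+2} = 0" by (intro sum.neutral) (auto simp: gw_def isA_def)
  finally show ?thesis by simp
qed



lemma gad_valid:
  assumes m: "m \<ge> 3" and ab: "0 \<le> a" "a \<le> 1" "0 \<le> b" "b \<le> 1"
  shows "valid_mwis (gad m a b)"
  unfolding valid_mwis_def
proof (intro conjI allI impI)
  fix u v assume "adj (gad m a b) u v"
  then show "u < nv (gad m a b)" "v < nv (gad m a b)"
    by (auto simp: gad_def gadj_def isA_def isB_def isQ_def)
next
  fix u v show "adj (gad m a b) u v = adj (gad m a b) v u"
    by (auto simp: gad_def gadj_def)
next
  fix v show "\<not> adj (gad m a b) v v"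
    by (auto simp: gad_def gadj_def isA_def isB_def isQ_def)
next
  fix v show "0 \<le> wt (gad m a b) v" by (simp add: gad_def gw_nonneg)
next
  fix S assume ind: "indep_set (gad m a b) S"
  have S: "S \<subseteq> {0..<2*m+2}" and na: "\<forall>u\<in>S. \<forall>v\<in>S. \<not> gadj m u v"
    using ind by (auto simp: indep_set_def gad_def)
  have wtx: "wt (gad m a b) = gw m a b" by (simp add: gad_def)
  show "sum (wt (gad m a b)) S \<le> 1"
  proof (cases "\<exists>u\<in>S. isA m u")
    case True
    then obtain u where u: "u \<in> S" "isA m u" by blast
    have "S \<subseteq> {2..<m+2}"
    proof
      fix v assume v: "v \<in> S"
      then have "\<not> gadj m u v" using na u by blast
      then show "v \<in> {2..<m+2}" using S v u(2) by (auto simp: gadj_def isA_def isB_def isQ_def)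
    qed
    then have "sum (gw m a b) S \<le> sum (gw m a b) {2..<m+2}"
      by (intro sum_mono2) (auto simp: gw_nonneg)
    also have "\<dots> = (\<Sum>v\<in>{2..<m+2}. 1 / real m)"
      by (intro sum.cong) (auto simp: gw_def isA_def)
    also have "\<dots> = 1" using m by simp
    finally show ?thesis unfolding wtx .
  next
    case False
    have "S \<subseteq> {0,1} \<union> {m+2..<2*m+2}"
    proof
      fix v assume v: "v \<in> S"
      then have "v < 2*m+2" "\<not> (2 \<le> v \<and> v < m+2)" using S False by (auto simp: isA_def)
      then show "v \<in> {0,1} \<union> {m+2..<2*m+2}" by auto
    qed
    then have "sum (gw m a b) S \<le> sum (gw m a b) ({0,1} \<union> {m+2..<2*m+2})"
      by (intro sum_mono2) (auto simp: gw_nonneg)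
    also have "\<dots> = gw m a b 0 + gw m a b 1 + sum (gw m a b) {m+2..<2*m+2}"
      using m by (subst sum.union_disjoint) auto
    also have "sum (gw m a b) {m+2..<2*m+2} = 0" by (intro sum.neutral) (auto simp: gw_def isA_def)
    finally have "sum (gw m a b) S \<le> gw m a b 0 + gw m a b 1" by simp
    also have "\<dots> \<le> 2/m + 1/m" using gw0_le[OF m ab(2), of b] gw1_le[OF m ab(3), of a] by (rule add_mono)
    also have "\<dots> \<le> 1" using m by (simp add: field_simps)
    finally show ?thesis unfolding wtx .
  qed
qed

lemma cost_le:
  assumes m: "m \<ge> 3" and ab: "a \<le> 1" "0 \<le> b"
  shows "cost ad \<rho> (gad m a b) \<le> 3/m + indicator {a<..<b} \<rho>"
proof (cases "a < \<rho> \<and> \<rho> < b")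
  case True then show ?thesis using cost_good[OF m] by (simp add: indicator_def)
next
  case False
  have "cost ad \<rho> (gad m a b) \<le> gw m a b 0 + gw m a b 1" by (rule cost_bad[OF m False])
  also have "\<dots> \<le> 2/m + 1/m" using gw0_le[OF m ab(1), of b] gw1_le[OF m ab(2), of a] by (rule add_mono)
  also have "\<dots> = 3/m" by (simp add: field_simps)
  finally show ?thesis by (simp add: indicator_def)
qed

lemma cost_le1:
  assumes m: "m \<ge> 3" and ab: "a \<le> 1" "0 \<le> b"
  shows "cost ad \<rho> (gad m a b) \<le> 1"
proof (cases "a < \<rho> \<and> \<rho> < b")
  case True then show ?thesis using cost_good[OF m] by simp
next
  case False
  have "cost ad \<rho> (gad m a b) \<le> gw m a b 0 + gw m a b 1" by (rule cost_bad[OF m False])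
  also have "\<dots> \<le> 2/m + 1/m" using gw0_le[OF m ab(1), of b] gw1_le[OF m ab(2), of a] by (rule add_mono)
  also have "\<dots> \<le> 1" using m by (simp add: field_simps)
  finally show ?thesis .
qed



lemma int_bound:
  fixes f :: "real \<Rightarrow> real"
  assumes ps: "prob_space M" and sM: "sets M = sets borel" and fb: "\<And>x. f x \<le> c + indicator I x"
    and c: "c \<ge> 0" and I: "I \<in> sets borel"
  shows "(\<integral>x. f x \<partial>M) \<le> c + measure M I"
proof (cases "integrable M f")
  case True
  interpret prob_space M by (rule ps)
  have IM: "I \<in> sets M" using I sM by simp
  have int2: "integrable M (\<lambda>x. c + indicator I x :: real)"
    using IM by (intro Bochner_Integration.integrable_add integrable_const integrable_real_indicator) (auto simp: emeasure_eq_measure)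
  have "(\<integral>x. f x \<partial>M) \<le> (\<integral>x. c + indicator I x \<partial>M)"
    by (rule integral_mono[OF True int2]) (rule fb)
  also have "\<dots> = (\<integral>x. c \<partial>M) + (\<integral>x. indicator I x \<partial>M)"
    by (rule Bochner_Integration.integral_add) (use IM in \<open>auto simp: emeasure_eq_measure\<close>)
  also have "\<dots> = c + measure M I" using IM by (simp add: prob_space sets.Int_space_eq2)
  finally show ?thesis .
next
  case False
  then show ?thesis using c by (simp add: not_integrable_integral_eq)
qed

definition piece :: "nat \<Rightarrow> real \<Rightarrow> real \<Rightarrow> nat \<Rightarrow> real set" where
  "piece m l L j = {l + j*L/m <..< l + j*L/m + L/m}"

lemma piece_disj:
  assumes "m > 0" "L > 0"
  shows "disjoint_family_on (piece m l L) {..<m}"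
  unfolding disjoint_family_on_def
proof (intro ballI impI)
  fix i j assume ij: "i \<in> {..<m}" "j \<in> {..<m}" "i \<noteq> j"
  have key: "l + real i*L/m + L/m \<le> l + real j*L/m" if "i < j" for i j :: nat
  proof -
    have "real i + 1 \<le> real j" using that by simp
    then have "(real i + 1) * (L/m) \<le> real j * (L/m)" using assms by (intro mult_right_mono) auto
    moreover have "real i * L / m + L/m = (real i+1)*(L/m)" "real j * L/m = real j*(L/m)" by (simp_all add: add_divide_distrib algebra_simps)
    ultimately show ?thesis by linarith
  qed
  have Lm: "L/m > 0" using assms by simp
  show "piece m l L i \<inter> piece m l L j = {}"
  proof (cases "i < j")
    case True then show ?thesis using key[OF True] Lm by (auto simp: piece_def min_def max_def)
  next
    case False then have "j < i" using ij by simp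
    then show ?thesis using key[of j i] Lm by (auto simp: piece_def min_def max_def)
  qed
qed

lemma ab_aux: fixes L l :: real and m j :: nat assumes m: "m \<ge> 3" and l: "0 \<le> l" and L: "0 < L" and lL: "l + L \<le> 1" and that: "j < m"
  shows "l + j*L/m \<le> 1" "0 \<le> l + j*L/m + L/m"
  proof -
    have "real j * (L/m) \<le> real m * (L/m)" using that L by (intro mult_right_mono) auto
    moreover have "real m * (L/m) = L" using m by simp
    moreover have "real j * L / m = real j * (L/m)" by simp
    ultimately have "j*L/m \<le> L" by linarith
    then show "l + j*L/m \<le> 1" using lL by linarith
    have "0 \<le> real j * L / m" "0 \<le> L/m" using L by simp_all
    then show "0 \<le> l + j*L/m + L/m" using l by linarith
  qed

lemma round_bound:
  fixes l L :: real and m :: nat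
  assumes m: "m \<ge> 3" and l: "0 \<le> l" and L: "0 < L" and lL: "l + L \<le> 1"
    and ps: "prob_space M" and sM: "sets M = sets borel"
  shows "(\<Sum>j<m. \<integral>\<rho>. cost ad \<rho> (gad m (l + real j*L/m) (l + real j*L/m + L/m)) \<partial>M) \<le> 4"
proof -
  interpret prob_space M by (rule ps)
  have S: "(\<Sum>j<m. \<integral>\<rho>. cost ad \<rho> (gad m (l + j*L/m) (l + j*L/m + L/m)) \<partial>M)
        \<le> (\<Sum>j<m. 3/m + measure M (piece m l L j))"
  proof (rule sum_mono)
    fix j assume "j \<in> {..<m}"
    then have j: "j < m" by simp
    show "(\<integral>\<rho>. cost ad \<rho> (gad m (l + j*L/m) (l + j*L/m + L/m)) \<partial>M) \<le> 3/m + measure M (piece m l L j)"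
    proof (rule int_bound[OF ps sM])
      fix \<rho> show "cost ad \<rho> (gad m (l + j*L/m) (l + j*L/m + L/m)) \<le> 3/m + indicator (piece m l L j) \<rho>"
        unfolding piece_def by (rule cost_le[OF m ab_aux[OF m l L lL j]])
      show "0 \<le> 3 / real m" by simp
      show "piece m l L j \<in> sets borel" unfolding piece_def by simp
    qed
  qed
  have e1: "(\<Sum>j<m. 3/real m + measure M (piece m l L j)) = (\<Sum>j<m. 3/real m) + (\<Sum>j<m. measure M (piece m l L j))"
    by (rule sum.distrib)
  have e2: "(\<Sum>j<m. 3/real m) = 3" using m by simp
  have e3: "(\<Sum>j<m. measure M (piece m l L j)) = measure M (\<Union>j\<in>{..<m}. piece m l L j)"
  proof (rule finite_measure_finite_Union[symmetric])
    show "finite {..<m}" by simp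
    show "piece m l L ` {..<m} \<subseteq> events"
    proof (rule image_subsetI)
      fix j show "piece m l L j \<in> events" using sM unfolding piece_def by simp
    qed
    show "disjoint_family_on (piece m l L) {..<m}" by (rule piece_disj) (use m L in auto)
  qed
  have e4: "measure M (\<Union>j\<in>{..<m}. piece m l L j) \<le> 1" by (rule prob_le_1)
  show ?thesis using S e1 e2 e3 e4 by linarith
qed



fun Dist :: "nat \<Rightarrow> nat \<Rightarrow> real \<Rightarrow> real \<Rightarrow> mwis list pmf" where
  "Dist m 0 l L = return_pmf []"
| "Dist m (Suc T) l L = pmf_of_set {..<m} \<bind>
     (\<lambda>j. map_pmf (\<lambda>rest. gad m (l + real j*L/real m) (l + real j*L/real m + L/real m) # rest)
            (Dist m T (l + real j*L/real m) (L/real m)))"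

lemma Dfin: "m > 0 \<Longrightarrow> finite (set_pmf (Dist m T l L))"
proof (induction T arbitrary: l L)
  case 0 then show ?case by simp
next
  case (Suc T)
  have ne: "{..<m} \<noteq> {}" using Suc.prems by auto
  show ?case using Suc ne by (simp add: set_bind_pmf)
qed

lemma piece_bounds:
  fixes l L :: real and m j :: nat
  assumes m: "m \<ge> 3" and l: "0 \<le> l" and L: "0 < L" and lL: "l + L \<le> 1" and j: "j < m"
  shows "l \<le> l + real j*L/real m" "0 < L/real m" "l + real j*L/real m + L/real m \<le> l + L"
proof -
  show "l \<le> l + real j*L/real m" using L by simp
  show "0 < L/real m" using L m by simp
  have "(real j + 1) * (L/m) \<le> real m * (L/m)" using j L by (intro mult_right_mono) auto
  moreover have "real m * (L/m) = L" using m by simp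
  moreover have "real j * L / m + L/m = (real j + 1) * (L/m)" by (simp add: add_divide_distrib algebra_simps)
  ultimately show "l + real j*L/real m + L/real m \<le> l + L" by linarith
qed

lemma Dsupp:
  fixes l L :: real
  assumes m: "m \<ge> 3" and "0 \<le> l" and "0 < L" and "l + L \<le> 1" and "xs \<in> set_pmf (Dist m T l L)"
  shows "length xs = T \<and> (\<forall>x\<in>set xs. valid_mwis x \<and> nv x = 2*m+2 \<and> (\<forall>r. cost ad r x \<le> 1)) \<and>
         (\<exists>\<rho>. l < \<rho> \<and> \<rho> < l + L \<and> (\<forall>t<T. cost ad \<rho> (xs!t) = 1))"
  using assms(2-)
proof (induction T arbitrary: l L xs)
  case 0
  then show ?case by (intro conjI exI[of _ "l + L/2"]) auto
next
  case (Suc T)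
  have ne: "{..<m} \<noteq> {}" using m by (auto simp: lessThan_empty_iff)
  from Suc.prems(4) obtain j rest where j: "j < m" and rest: "rest \<in> set_pmf (Dist m T (l + real j*L/real m) (L/real m))"
    and xs: "xs = gad m (l + real j*L/real m) (l + real j*L/real m + L/real m) # rest"
    using ne by (auto simp: set_bind_pmf)
  define l' where "l' = l + real j*L/real m"
  define L' where "L' = L/real m"
  have pb: "l \<le> l'" "0 < L'" "l' + L' \<le> l + L"
    using piece_bounds[OF m Suc.prems(1,2,3) j] by (simp_all add: l'_def L'_def)
  have IH: "length rest = T \<and> (\<forall>x\<in>set rest. valid_mwis x \<and> nv x = 2*m+2 \<and> (\<forall>r. cost ad r x \<le> 1)) \<and>
         (\<exists>\<rho>. l' < \<rho> \<and> \<rho> < l' + L' \<and> (\<forall>t<T. cost ad \<rho> (rest!t) = 1))"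
    using Suc.IH[of l' L' rest] pb Suc.prems rest by (simp add: l'_def L'_def)
  then obtain \<rho> where \<rho>: "l' < \<rho>" "\<rho> < l' + L'" "\<forall>t<T. cost ad \<rho> (rest!t) = 1" by blast
  have xs': "xs = gad m l' (l' + L') # rest" using xs by (simp add: l'_def L'_def)
  have val: "valid_mwis (gad m l' (l' + L'))"
    by (rule gad_valid[OF m]) (use pb Suc.prems in auto)
  have nvg: "nv (gad m l' (l' + L')) = 2*m+2" by (simp add: gad_def)
  have le1: "\<forall>r. cost ad r (gad m l' (l' + L')) \<le> 1"
    using cost_le1[OF m] pb Suc.prems by auto
  have c0: "cost ad \<rho> (gad m l' (l' + L')) = 1" by (rule cost_good[OF m \<rho>(1,2)])
  have "\<forall>t<Suc T. cost ad \<rho> (xs!t) = 1"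
  proof (intro allI impI)
    fix t assume "t < Suc T"
    then show "cost ad \<rho> (xs!t) = 1" using c0 \<rho>(3) unfolding xs' by (cases t) auto
  qed
  moreover have "l < \<rho>" "\<rho> < l + L" using pb \<rho> by linarith+
  ultimately show ?case using IH val nvg xs' le1 by auto
qed



definition Gsum :: "bool \<Rightarrow> nat \<Rightarrow> (mwis list \<Rightarrow> real measure) \<Rightarrow> mwis list \<Rightarrow> real" where
  "Gsum ad T Lrn xs = (\<Sum>t<T. \<integral>\<rho>. cost ad \<rho> (xs ! t) \<partial>(Lrn (take t xs)))"

lemma Gsum_Cons: "Gsum ad (Suc T) Lrn (x # rest) =
   (\<integral>\<rho>. cost ad \<rho> x \<partial>(Lrn [])) + Gsum ad T (\<lambda>ys. Lrn (x # ys)) rest"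
  unfolding Gsum_def by (subst sum.lessThan_Suc_shift) simp

lemma Dexp:
  fixes l L :: real
  assumes m: "m \<ge> 3" and "0 \<le> l" and "0 < L" and "l + L \<le> 1" and "valid_learner Lrn"
  shows "measure_pmf.expectation (Dist m T l L) (Gsum ad T Lrn) \<le> real T * (4 / real m)"
  using assms(2-)
proof (induction T arbitrary: l L Lrn)
  case 0
  then show ?case by (simp add: Gsum_def)
next
  case (Suc T)
  have m0: "m > 0" using m by simp
  have ne: "{..<m} \<noteq> {}" using m by (auto simp: lessThan_empty_iff)
  define g where "g j = gad m (l + real j*L/real m) (l + real j*L/real m + L/real m)" for j :: nat
  define c where "c j = (\<integral>\<rho>. cost ad \<rho> (g j) \<partial>(Lrn []))" for j
  have tb: "measure_pmf.expectation (map_pmf (\<lambda>rest. g j # rest) (Dist m T (l + real j*L/real m) (L/real m))) (Gsum ad (Suc T) Lrn)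
      \<le> c j + real T * (4 / real m)" if j: "j < m" for j
  proof -
    let ?D = "Dist m T (l + real j*L/real m) (L/real m)"
    have fin: "finite (set_pmf ?D)" by (rule Dfin[OF m0])
    have "measure_pmf.expectation (map_pmf (\<lambda>rest. g j # rest) ?D) (Gsum ad (Suc T) Lrn)
        = measure_pmf.expectation ?D (\<lambda>rest. c j + Gsum ad T (\<lambda>ys. Lrn (g j # ys)) rest)"
      by (simp add: Gsum_Cons c_def)
    also have "\<dots> = c j + measure_pmf.expectation ?D (Gsum ad T (\<lambda>ys. Lrn (g j # ys)))"
      using fin by (subst Bochner_Integration.integral_add) (auto intro: integrable_measure_pmf_finite)
    also have "measure_pmf.expectation ?D (Gsum ad T (\<lambda>ys. Lrn (g j # ys))) \<le> real T * (4 / real m)"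
    proof (rule Suc.IH)
      have pb: "l \<le> l + real j*L/real m" "0 < L/real m" "l + real j*L/real m + L/real m \<le> l + L"
        using piece_bounds[OF m Suc.prems(1,2,3) j] by simp_all
      show "0 \<le> l + real j*L/real m" using pb Suc.prems by linarith
      show "0 < L/real m" by (rule pb(2))
      show "l + real j*L/real m + L/real m \<le> 1" using pb Suc.prems by linarith
      show "valid_learner (\<lambda>ys. Lrn (g j # ys))" using Suc.prems(4) by (simp add: valid_learner_def)
    qed
    finally show ?thesis by simp
  qed
  have lp: "prob_space (Lrn [])" "sets (Lrn []) = sets borel" using Suc.prems(4) by (auto simp: valid_learner_def)
  have csum: "(\<Sum>j<m. c j) \<le> 4"
    unfolding c_def g_def by (rule round_bound[OF m Suc.prems(1,2,3) lp])
  have "measure_pmf.expectation (Dist m (Suc T) l L) (Gsum ad (Suc T) Lrn)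
      = (\<Sum>j\<in>{..<m}. measure_pmf.expectation (map_pmf (\<lambda>rest. g j # rest) (Dist m T (l + real j*L/real m) (L/real m))) (Gsum ad (Suc T) Lrn) /\<^sub>R real (card {..<m}))"
    unfolding Dist.simps g_def
    by (rule pmf_expectation_bind_pmf_of_set) (use ne Dfin[OF m0] in auto)
  also have "\<dots> \<le> (\<Sum>j\<in>{..<m}. (c j + real T * (4 / real m)) / real m)"
  proof (rule sum_mono)
    fix j assume "j \<in> {..<m}"
    then have j: "j < m" by simp
    show "measure_pmf.expectation (map_pmf (\<lambda>rest. g j # rest) (Dist m T (l + real j*L/real m) (L/real m))) (Gsum ad (Suc T) Lrn) /\<^sub>R real (card {..<m})
        \<le> (c j + real T * (4 / real m)) / real m"
      using divide_right_mono[OF tb[OF j], of "real m"] m0 by (simp add: divide_inverse_commute)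
  qed
  also have "\<dots> = (\<Sum>j<m. c j) / real m + real T * (4 / real m)"
    using m0 by (simp add: sum_divide_distrib[symmetric] sum.distrib add_divide_distrib)
  also have "\<dots> \<le> 4 / real m + real T * (4 / real m)"
    using csum m0 by (simp add: divide_right_mono)
  also have "\<dots> = real (Suc T) * (4 / real m)" by (simp add: algebra_simps add_divide_distrib)
  finally show ?case .
qed



definition x0 :: mwis where "x0 = \<lparr>nv = 0, adj = (\<lambda>_ _. False), wt = (\<lambda>_. 0)\<rparr>"

lemma x0_valid: "valid_mwis x0"
  by (auto simp: valid_mwis_def x0_def indep_set_def)

lemma x0_cost: "cost ad \<rho> x0 = 0"
  by (simp add: cost_def greedy_def x0_def)

definition eps :: "nat \<Rightarrow> real" where
  "eps n = (if n < 8 then 1 else 4 / real ((n - 2) div 2))"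

lemma eps_lim: "eps \<longlonglongrightarrow> 0"
proof (rule tendsto_sandwich[of "\<lambda>_. 0" _ _ "\<lambda>n. 16 / real n"])
  show "\<forall>\<^sub>F n in sequentially. 0 \<le> eps n" by (simp add: eps_def)
  show "\<forall>\<^sub>F n in sequentially. eps n \<le> 16 / real n"
  proof (rule eventually_sequentiallyI[of 8])
    fix n :: nat assume n: "8 \<le> n"
    have "real n \<le> 4 * real ((n - 2) div 2)" using n by linarith
    moreover have "real ((n - 2) div 2) > 0" using n by simp
    ultimately show "eps n \<le> 16 / real n" using n by (simp add: eps_def field_simps)
  qed
  show "(\<lambda>_. 0 :: real) \<longlonglongrightarrow> 0" by simp
  show "(\<lambda>n. 16 / real n) \<longlonglongrightarrow> 0" by (rule lim_const_over_n)
qed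

theorem mainTheorem12:
  fixes ad :: bool
  shows "\<exists>\<epsilon> :: nat \<Rightarrow> real. \<epsilon> \<longlonglongrightarrow> 0 \<and>
    (\<forall>n T. T \<ge> 1 \<longrightarrow>
      (\<exists>D :: mwis list pmf.
         (\<forall>xs\<in>set_pmf D. length xs = T \<and> (\<forall>x\<in>set xs. valid_mwis x \<and> nv x \<le> n)) \<and>
         (\<forall>L. valid_learner L \<longrightarrow> expected_regret ad T D L \<ge> 1 - \<epsilon> n)))"
proof (intro exI[of _ eps] conjI allI impI)
  show "eps \<longlonglongrightarrow> 0" by (rule eps_lim)
  fix n T :: nat assume T: "T \<ge> 1"
  show "\<exists>D :: mwis list pmf.
         (\<forall>xs\<in>set_pmf D. length xs = T \<and> (\<forall>x\<in>set xs. valid_mwis x \<and> nv x \<le> n)) \<and>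
         (\<forall>L. valid_learner L \<longrightarrow> expected_regret ad T D L \<ge> 1 - eps n)"
  proof (cases "n < 8")
    case True
    show ?thesis
    proof (intro exI[of _ "return_pmf (replicate T x0)"] conjI allI impI)
      show "\<forall>xs\<in>set_pmf (return_pmf (replicate T x0)). length xs = T \<and> (\<forall>x\<in>set xs. valid_mwis x \<and> nv x \<le> n)"
        using x0_valid by (simp add: x0_def)
      fix L assume "valid_learner L"
      have "regret ad T L (replicate T x0) = 0"
        unfolding regret_def by (simp add: x0_cost)
      then show "expected_regret ad T (return_pmf (replicate T x0)) L \<ge> 1 - eps n"
        using True by (simp add: expected_regret_def eps_def)
    qed
  next
    case False
    define m where "m = (n - 2) div 2"
    have m: "m \<ge> 3" using False by (simp add: m_def)
    have mn: "2*m+2 \<le> n" using False by (simp add: m_def)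
    have epsn: "eps n = 4 / real m" using False by (simp add: eps_def m_def)
    let ?D = "Dist m T 0 1"
    have fin: "finite (set_pmf ?D)" by (rule Dfin) (use m in simp)
    show ?thesis
    proof (intro exI[of _ ?D] conjI allI impI)
      show "\<forall>xs\<in>set_pmf ?D. length xs = T \<and> (\<forall>x\<in>set xs. valid_mwis x \<and> nv x \<le> n)"
      proof
        fix xs assume "xs \<in> set_pmf ?D"
        from Dsupp[OF m _ _ _ this, of ad] mn
        show "length xs = T \<and> (\<forall>x\<in>set xs. valid_mwis x \<and> nv x \<le> n)" by auto
      qed
    next
      fix L assume vL: "valid_learner L"
      have reg: "regret ad T L xs \<ge> 1 - Gsum ad T L xs / real T" if xs: "xs \<in> set_pmf ?D" for xs
      proof -
        obtain \<rho> where r: "0 < \<rho>" "\<rho> < 1" "\<forall>t<T. cost ad \<rho> (xs!t) = 1"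
          and len: "length xs = T" and le1: "\<forall>x\<in>set xs. \<forall>r. cost ad r x \<le> 1"
          using Dsupp[OF m _ _ _ xs, of ad] by auto
        have bdd: "bdd_above ((\<lambda>r. \<Sum>t<T. cost ad r (xs ! t)) ` {0..1})"
        proof (rule bdd_aboveI2)
          fix r :: real
          have "(\<Sum>t<T. cost ad r (xs ! t)) \<le> (\<Sum>t<T. 1)"
            by (rule sum_mono) (use le1 len in \<open>auto simp: set_conv_nth\<close>)
          then show "(\<Sum>t<T. cost ad r (xs ! t)) \<le> real T" by simp
        qed
        have "real T = (\<Sum>t<T. cost ad \<rho> (xs ! t))" using r by simp
        also have "\<dots> \<le> (SUP r\<in>{0..1}. \<Sum>t<T. cost ad r (xs ! t))"
          by (rule cSUP_upper[OF _ bdd]) (use r in auto)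
        finally have S: "real T \<le> (SUP r\<in>{0..1}. \<Sum>t<T. cost ad r (xs ! t))" .
        have Tp: "real T > 0" using T by simp
        have "1 - Gsum ad T L xs / real T = (1 / real T) * (real T - Gsum ad T L xs)"
          using Tp by (simp add: field_simps)
        also have "\<dots> \<le> (1 / real T) * ((SUP r\<in>{0..1}. \<Sum>t<T. cost ad r (xs ! t)) - Gsum ad T L xs)"
          using S Tp by (intro mult_left_mono) auto
        also have "\<dots> = regret ad T L xs" by (simp add: regret_def Gsum_def)
        finally show ?thesis .
      qed
      have A: "measure_pmf.expectation ?D (\<lambda>xs. 1 - Gsum ad T L xs / real T) \<le> measure_pmf.expectation ?D (regret ad T L)"
        by (rule integral_mono_AE) (use fin reg in \<open>auto intro: integrable_measure_pmf_finite simp: AE_measure_pmf_iff\<close>)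
      have B: "measure_pmf.expectation ?D (\<lambda>xs. 1 - Gsum ad T L xs / real T)
          = 1 - measure_pmf.expectation ?D (Gsum ad T L) / real T"
        using fin by (subst Bochner_Integration.integral_diff) (auto intro: integrable_measure_pmf_finite)
      have C: "measure_pmf.expectation ?D (Gsum ad T L) \<le> real T * (4 / real m)"
        by (rule Dexp[OF m _ _ _ vL]) simp_all
      have Tp: "real T > 0" using T by simp
      have "measure_pmf.expectation ?D (Gsum ad T L) / real T \<le> 4 / real m"
        using C Tp by (simp add: pos_divide_le_eq mult.commute)
      then show "expected_regret ad T ?D L \<ge> 1 - eps n"
        unfolding expected_regret_def epsn using A B by linarith
    qed
  qed
qed


end
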